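(* Let $k\le n$ be positive integers, $x^*\in\mathbb{R}^n$ with support $S^*$, $|S^*|\le k$, $\mathcal{X}^0\in\mathbb{R}^n$ and $\eta>0$. Consider the oracle sequence $(S^t,u^t,\mathcal{X}^t)_{t\ge0}$ and the counts $c^t_i$ defined below. For all $i\in S^*$ and all integers $t\ge1$: if $c^t_i>\frac{2\|\mathcal{X}^0\|_\infty}{\eta|x^*_i|}$, then $i\in S^{t'}$ for all $t'\ge t$.
   Context: $S^*=\{i:x^*_i\neq0\}$. For $v\in\mathbb{R}^n$, $\mathrm{largest}_k(v)$ is the set of indices of the $k$ entries of $v$ with largest absolute value (ties broken by selecting the highest indices). The oracle sequence is defined for all $t\ge0$ by $S^t=\mathrm{largest}_k(\mathcal{X}^t)$, $u^t_i=-\eta x^*_i$ if $i\in S^*\setminus S^t$ and $u^t_i=0$ otherwise, and $\mathcal{X}^{t+1}=\mathcal{X}^t-u^t$. For $i\in\{1,\dots,n\}$, $c^0_i=0$ and, for $t\ge1$, $c^t_i=|\{t'\in\{0,\dots,t-1\}: i\in S^*\setminus S^{t'}\}|$. *)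

theory Defs
  imports Complex_Main
begin

text \<open>Vectors in R^n are modelled as functions nat \<Rightarrow> real, with coordinates indexed by {1..n}.\<close>

definition supp :: "nat \<Rightarrow> (nat \<Rightarrow> real) \<Rightarrow> nat set" where
  "supp n x = {i \<in> {1..n}. x i \<noteq> 0}"

definition linf_norm :: "nat \<Rightarrow> (nat \<Rightarrow> real) \<Rightarrow> real" where
  "linf_norm n x = Max ((\<lambda>i. \<bar>x i\<bar>) ` {1..n})"

definition beats :: "(nat \<Rightarrow> real) \<Rightarrow> nat \<Rightarrow> nat \<Rightarrow> bool" where
  "beats v j i \<longleftrightarrow> \<bar>v j\<bar> > \<bar>v i\<bar> \<or> (\<bar>v j\<bar> = \<bar>v i\<bar> \<and> j > i)"

text \<open>largest_k: indices of the k entries with largest absolute value, ties broken by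
  selecting the highest indices; i.e. those i with fewer than k indices beating them.\<close>
definition largest :: "nat \<Rightarrow> nat \<Rightarrow> (nat \<Rightarrow> real) \<Rightarrow> nat set" where
  "largest n k v = {i \<in> {1..n}. card {j \<in> {1..n}. beats v j i} < k}"

fun oracle_X :: "nat \<Rightarrow> nat \<Rightarrow> (nat \<Rightarrow> real) \<Rightarrow> (nat \<Rightarrow> real) \<Rightarrow> real \<Rightarrow> nat \<Rightarrow> (nat \<Rightarrow> real)" where
  "oracle_X n k xs X0 eta 0 = X0"
| "oracle_X n k xs X0 eta (Suc t) =
     (let X = oracle_X n k xs X0 eta t;
          S = largest n k X;
          u = (\<lambda>i. if i \<in> supp n xs - S then - eta * xs i else 0)
      in (\<lambda>i. X i - u i))"

definition oracle_S :: "nat \<Rightarrow> nat \<Rightarrow> (nat \<Rightarrow> real) \<Rightarrow> (nat \<Rightarrow> real) \<Rightarrow> real \<Rightarrow> nat \<Rightarrow> nat set" where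
  "oracle_S n k xs X0 eta t = largest n k (oracle_X n k xs X0 eta t)"

definition oracle_c :: "nat \<Rightarrow> nat \<Rightarrow> (nat \<Rightarrow> real) \<Rightarrow> (nat \<Rightarrow> real) \<Rightarrow> real \<Rightarrow> nat \<Rightarrow> nat \<Rightarrow> nat" where
  "oracle_c n k xs X0 eta t i = card {t'. t' < t \<and> i \<in> supp n xs - oracle_S n k xs X0 eta t'}"

end

theory Submission
  imports Defs
begin

lemma c_Suc:
  "oracle_c n k xs X0 eta (Suc t) i = oracle_c n k xs X0 eta t i +
     (if i \<in> supp n xs - oracle_S n k xs X0 eta t then 1 else 0)"
proof -
  let ?P = "\<lambda>t'. i \<in> supp n xs - oracle_S n k xs X0 eta t'"
  have e: "{t'. t' < Suc t \<and> ?P t'} = (if ?P t then insert t {t'. t' < t \<and> ?P t'} else {t'. t' < t \<and> ?P t'})"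
    by (auto simp: less_Suc_eq)
  have f: "finite {t'. t' < t \<and> ?P t'}" by simp
  show ?thesis unfolding oracle_c_def e using f by auto
qed

lemma X_formula:
  "oracle_X n k xs X0 eta t i = (if i \<in> supp n xs then X0 i + eta * real (oracle_c n k xs X0 eta t i) * xs i else X0 i)"
proof (induction t)
  case 0
  then show ?case by (simp add: oracle_c_def)
next
  case (Suc t)
  then show ?case by (simp add: Let_def c_Suc oracle_S_def algebra_simps)
qed

lemma c_mono:
  assumes "t \<le> t'"
  shows "oracle_c n k xs X0 eta t i \<le> oracle_c n k xs X0 eta t' i"
  unfolding oracle_c_def
  by (rule card_mono) (use assms in auto)

theorem lemmaC2:
  fixes n k :: nat and xs X0 :: "nat \<Rightarrow> real" and eta :: real
  assumes "0 < k" and "k \<le> n"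
    and "card (supp n xs) \<le> k"
    and "eta > 0"
  shows "\<forall>i \<in> supp n xs. \<forall>t \<ge> 1.
           real (oracle_c n k xs X0 eta t i) > 2 * linf_norm n X0 / (eta * \<bar>xs i\<bar>)
           \<longrightarrow> (\<forall>t' \<ge> t. i \<in> oracle_S n k xs X0 eta t')"
proof (intro ballI allI impI)
  fix i t t'
  assume i: "i \<in> supp n xs" and "1 \<le> t"
    and c: "real (oracle_c n k xs X0 eta t i) > 2 * linf_norm n X0 / (eta * \<bar>xs i\<bar>)"
    and tt: "t \<le> t'"
  let ?M = "linf_norm n X0"
  let ?X = "oracle_X n k xs X0 eta t'"
  let ?c = "real (oracle_c n k xs X0 eta t' i)"
  have iin: "i \<in> {1..n}" and xi: "xs i \<noteq> 0" using i by (auto simp: supp_def)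
  have pos: "eta * \<bar>xs i\<bar> > 0" using xi assms(4) by simp
  have bound: "\<And>j. j \<in> {1..n} \<Longrightarrow> \<bar>X0 j\<bar> \<le> ?M"
    unfolding linf_norm_def by (rule Max_ge) auto
  have "?c \<ge> real (oracle_c n k xs X0 eta t i)" using c_mono[OF tt] by simp
  hence "?c > 2 * ?M / (eta * \<bar>xs i\<bar>)" using c by linarith
  hence big: "?c * (eta * \<bar>xs i\<bar>) > 2 * ?M" using pos by (simp add: field_simps)
  have Xi: "?X i = X0 i + eta * ?c * xs i" using X_formula i by simp
  have "\<bar>eta * ?c * xs i\<bar> = ?c * (eta * \<bar>xs i\<bar>)" using assms(4) by (simp add: abs_mult)
  hence Xbig: "\<bar>?X i\<bar> > ?M" using Xi big bound[OF iin] by linarith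
  have sub: "{j \<in> {1..n}. beats ?X j i} \<subseteq> supp n xs - {i}"
  proof
    fix j assume j: "j \<in> {j \<in> {1..n}. beats ?X j i}"
    hence jn: "j \<in> {1..n}" and b: "beats ?X j i" by auto
    have "j \<noteq> i" using b by (auto simp: beats_def)
    moreover have "j \<in> supp n xs"
    proof (rule ccontr)
      assume "j \<notin> supp n xs"
      hence "?X j = X0 j" using X_formula by simp
      hence "\<bar>?X j\<bar> \<le> ?M" using bound[OF jn] by simp
      thus False using b Xbig by (auto simp: beats_def)
    qed
    ultimately show "j \<in> supp n xs - {i}" by simp
  qed
  have fin: "finite (supp n xs)" by (simp add: supp_def)
  have "card {j \<in> {1..n}. beats ?X j i} \<le> card (supp n xs - {i})"
    by (rule card_mono) (use fin sub in auto)
  also have "\<dots> = card (supp n xs) - 1" using i fin by simp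
  also have "\<dots> < k" using assms(1,3) i fin
    by (metis card_gt_0_iff diff_less empty_iff less_le_trans zero_less_one le_neq_implies_less diff_le_self)
  finally show "i \<in> oracle_S n k xs X0 eta t'"
    unfolding oracle_S_def largest_def using iin by simp
qed

end
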